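(* Let $D=(E,\mathcal{F})$ be a proper set system, $a,b\in E$ with $a\neq b$, and let $A\subseteq E$ satisfy $|A\cap\{a,b\}|=0$ or $|A\cap\{a,b\}|=2$. Then $\omega(D* A)=\omega(\widetilde{D}_{ab}* A)$.
   Context: A set system $D=(E,\mathcal{F})$ is a finite set $E$ together with a collection $\mathcal{F}$ of subsets of $E$ (feasible sets); proper means $\mathcal{F}\neq\emptyset$. $\triangle$ denotes symmetric difference. For $A\subseteq E$, the twist is $D*A=(E,\{A\triangle X: X\in\mathcal{F}\})$. The width $\omega(D)$ of a proper set system is the size of a largest feasible set minus the size of a smallest feasible set. For distinct $a,b\in E$, the result of handle sliding of $a$ over $b$ is $\widetilde{D}_{ab}=(E,\widetilde{\mathcal{F}}_{ab})$ with $\widetilde{\mathcal{F}}_{ab}=\mathcal{F}\triangle\{F\cup\{a\}\mid F\cup\{b\}\in\mathcal{F},\ F\subseteq E\setminus\{a,b\}\}$. *)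

theory Defs
  imports Main
begin

definition symdiff :: "'a set \<Rightarrow> 'a set \<Rightarrow> 'a set" (infixl "\<triangle>" 70) where
  "X \<triangle> Y = (X - Y) \<union> (Y - X)"

definition set_system :: "'a set \<Rightarrow> 'a set set \<Rightarrow> bool" where
  "set_system E \<F> \<longleftrightarrow> finite E \<and> \<F> \<subseteq> Pow E"

definition proper_set_system :: "'a set \<Rightarrow> 'a set set \<Rightarrow> bool" where
  "proper_set_system E \<F> \<longleftrightarrow> set_system E \<F> \<and> \<F> \<noteq> {}"

definition twist :: "'a set set \<Rightarrow> 'a set \<Rightarrow> 'a set set" where
  "twist \<F> A = (\<lambda>X. A \<triangle> X) ` \<F>"

definition width :: "'a set set \<Rightarrow> nat" where
  "width \<F> = Max (card ` \<F>) - Min (card ` \<F>)"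

definition handle_slide :: "'a set \<Rightarrow> 'a set set \<Rightarrow> 'a \<Rightarrow> 'a \<Rightarrow> 'a set set" where
  "handle_slide E \<F> a b =
     \<F> \<triangle> {F \<union> {a} | F. F \<union> {b} \<in> \<F> \<and> F \<subseteq> E - {a, b}}"

end

theory Submission
  imports Defs
begin

lemma card_slide_eq:
  assumes fin: "finite E" and AE: "A \<subseteq> E" and F0: "F0 \<subseteq> E - {a, b}"
    and iff: "a \<in> A \<longleftrightarrow> b \<in> A" and ab: "a \<noteq> b"
  shows "card (A \<triangle> (F0 \<union> {a})) = card (A \<triangle> (F0 \<union> {b}))"
proof -
  have finS: "finite (A \<triangle> F0)" using fin AE F0
    by (metis Diff_subset finite_Un finite_subset symdiff_def Un_Diff)
  have na: "a \<notin> F0" and nb: "b \<notin> F0" using F0 by auto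
  show ?thesis
  proof (cases "a \<in> A")
    case True
    then have bA: "b \<in> A" using iff by simp
    have e1: "A \<triangle> (F0 \<union> {a}) = (A \<triangle> F0) - {a}" using True na by (auto simp: symdiff_def)
    have e2: "A \<triangle> (F0 \<union> {b}) = (A \<triangle> F0) - {b}" using bA nb by (auto simp: symdiff_def)
    have "a \<in> A \<triangle> F0" "b \<in> A \<triangle> F0" using True bA na nb by (auto simp: symdiff_def)
    then show ?thesis using e1 e2 finS by simp
  next
    case False
    then have bA: "b \<notin> A" using iff by simp
    have e1: "A \<triangle> (F0 \<union> {a}) = insert a (A \<triangle> F0)" using False na by (auto simp: symdiff_def)
    have e2: "A \<triangle> (F0 \<union> {b}) = insert b (A \<triangle> F0)" using bA nb by (auto simp: symdiff_def)
    have "a \<notin> A \<triangle> F0" "b \<notin> A \<triangle> F0" using False bA na nb by (auto simp: symdiff_def)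
    then show ?thesis using e1 e2 finS by simp
  qed
qed

theorem proposition3p2:
  fixes E :: "'a set" and \<F> :: "'a set set" and a b :: 'a and A :: "'a set"
  assumes "proper_set_system E \<F>"
    and "a \<in> E" and "b \<in> E" and "a \<noteq> b"
    and "A \<subseteq> E"
    and "card (A \<inter> {a, b}) = 0 \<or> card (A \<inter> {a, b}) = 2"
  shows "width (twist \<F> A) = width (twist (handle_slide E \<F> a b) A)"
proof -
  have fin: "finite E" using assms(1) by (simp add: proper_set_system_def set_system_def)
  have iff: "a \<in> A \<longleftrightarrow> b \<in> A"
  proof -
    have "A \<inter> {a, b} = {} \<or> A \<inter> {a,b} = {a,b}"
    proof (cases "card (A \<inter> {a, b}) = 0")
      case True
      then show ?thesis by simp
    next
      case False
      then have "card (A \<inter> {a, b}) = 2" using assms(6) by (metis (no_types))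
      then have "card (A \<inter> {a, b}) = card {a,b}" using assms(4) by simp
      then show ?thesis by (metis card_subset_eq finite.emptyI finite.insertI inf_le2)
    qed
    then show ?thesis by auto
  qed
  define S where "S = {F \<union> {a} | F. F \<union> {b} \<in> \<F> \<and> F \<subseteq> E - {a, b}}"
  have hs: "handle_slide E \<F> a b = \<F> \<triangle> S" by (simp add: handle_slide_def S_def)
  have ceq: "\<And>F0. F0 \<subseteq> E - {a, b} \<Longrightarrow> card (A \<triangle> (F0 \<union> {a})) = card (A \<triangle> (F0 \<union> {b}))"
    using card_slide_eq[OF fin assms(5) _ iff assms(4)] by blast
  have "card ` twist (\<F> \<triangle> S) A = card ` twist \<F> A"
  proof
    show "card ` twist (\<F> \<triangle> S) A \<subseteq> card ` twist \<F> A"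
    proof
      fix n assume "n \<in> card ` twist (\<F> \<triangle> S) A"
      then obtain X where X: "X \<in> \<F> \<triangle> S" and n: "n = card (A \<triangle> X)"
        by (auto simp: twist_def)
      show "n \<in> card ` twist \<F> A"
      proof (cases "X \<in> \<F>")
        case True then show ?thesis using n by (auto simp: twist_def)
      next
        case False
        then have "X \<in> S" using X by (auto simp: symdiff_def)
        then obtain F0 where "X = F0 \<union> {a}" "F0 \<union> {b} \<in> \<F>" "F0 \<subseteq> E - {a,b}"
          by (auto simp: S_def)
        then show ?thesis using n ceq by (auto simp: twist_def)
      qed
    qed
  next
    show "card ` twist \<F> A \<subseteq> card ` twist (\<F> \<triangle> S) A"
    proof
      fix n assume "n \<in> card ` twist \<F> A"
      then obtain X where X: "X \<in> \<F>" and n: "n = card (A \<triangle> X)"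
        by (auto simp: twist_def)
      show "n \<in> card ` twist (\<F> \<triangle> S) A"
      proof (cases "X \<in> S")
        case False then show ?thesis using n X by (auto simp: twist_def symdiff_def)
      next
        case True
        then obtain F0 where F0: "X = F0 \<union> {a}" "F0 \<union> {b} \<in> \<F>" "F0 \<subseteq> E - {a,b}"
          by (auto simp: S_def)
        have "F0 \<union> {b} \<notin> S" using F0(3) assms(4) by (auto simp: S_def)
        then have "F0 \<union> {b} \<in> \<F> \<triangle> S" using F0(2) by (auto simp: symdiff_def)
        moreover have "n = card (A \<triangle> (F0 \<union> {b}))" using n F0 ceq by simp
        ultimately show ?thesis by (auto simp: twist_def)
      qed
    qed
  qed
  then show ?thesis using hs by (simp add: width_def)
qed

end
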